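(* Let $\Phi_1,\Phi_2$ be simple point processes on $\mathbb{R}^d$. If $\Phi_1$ has smaller void probabilities than $\Phi_2$, i.e. $\Pr\{\Phi_1(B)=0\}\le\Pr\{\Phi_2(B)=0\}$ for all bounded Borel $B$, then $\overline r_c(\Phi_1)\le\overline r_c(\Phi_2)$.
   Context: For $r>0$, $x\in\mathbb{R}^d$, let $Q^r=(-\frac{1}{2r},\frac{1}{2r}]^d$ and $Q^r(x)=x+Q^r$. For $n\in\mathbb{N}$, $\mathbb{L}^{*d}_n$ is the graph with vertex set $\mathbb{Z}^d_n=\frac1n\mathbb{Z}^d$ and edges $\langle z_i,z_j\rangle$ whenever $Q^{n/2}(z_i)\cap Q^{n/2}(z_j)\ne\emptyset$. A contour is a minimal collection of vertices of $\mathbb{L}^{*d}_n$ such that every infinite path in $\mathbb{L}^{*d}_n$ from the origin contains one of these vertices (minimal: removing any vertex yields an infinite path from the origin avoiding the remaining ones). $\Gamma_n$ is the set of all contours around the origin in $\mathbb{L}^{*d}_n$, and for $\gamma\subset\mathbb{R}^d$, $Q_\gamma=\bigcup_{z\in\gamma}Q^n(z)$. For a point process $\Phi$, $C(\Phi,r)=\bigcup_{X\in\Phi}B_X(r)$, and $\overline r_c(\Phi)=\inf\{r>0:\text{for all }n\ge1,\ \sum_{\gamma\in\Gamma_n}\Pr\{C(\Phi,r)\cap Q_\gamma=\emptyset\}<\infty\}$. *)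

theory Defs
  imports "HOL-Probability.Probability"
begin

text \<open>Points of R^d are vectors real^'d (the index type 'd has cardinality d).\<close>

definition cube :: "real \<Rightarrow> real^'d \<Rightarrow> (real^'d) set" where
  "cube r x = {y. \<forall>i. x$i - 1/(2*r) < y$i \<and> y$i \<le> x$i + 1/(2*r)}"

definition lattice :: "nat \<Rightarrow> (real^'d) set" where
  "lattice n = {z. \<forall>i. \<exists>k::int. z$i = of_int k / real n}"

definition lat_adj :: "nat \<Rightarrow> real^'d \<Rightarrow> real^'d \<Rightarrow> bool" where
  "lat_adj n z w \<longleftrightarrow> z \<in> lattice n \<and> w \<in> lattice n \<and> z \<noteq> w \<and>
     cube (real n / 2) z \<inter> cube (real n / 2) w \<noteq> {}"

definition inf_path :: "nat \<Rightarrow> (nat \<Rightarrow> real^'d) \<Rightarrow> bool" where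
  "inf_path n p \<longleftrightarrow> p 0 = 0 \<and> inj p \<and> (\<forall>k. lat_adj n (p k) (p (Suc k)))"

definition blocks :: "nat \<Rightarrow> (real^'d) set \<Rightarrow> bool" where
  "blocks n S \<longleftrightarrow> (\<forall>p. inf_path n p \<longrightarrow> (\<exists>k. p k \<in> S))"

definition contours :: "nat \<Rightarrow> (real^'d) set set" where
  "contours n = {\<gamma>. \<gamma> \<subseteq> lattice n \<and> blocks n \<gamma> \<and> (\<forall>z\<in>\<gamma>. \<not> blocks n (\<gamma> - {z}))}"

definition Qset :: "nat \<Rightarrow> (real^'d) set \<Rightarrow> (real^'d) set" where
  "Qset n \<gamma> = (\<Union>z\<in>\<gamma>. cube (real n) z)"

definition covered :: "(real^'d) set \<Rightarrow> real \<Rightarrow> (real^'d) set" where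
  "covered \<phi> r = (\<Union>X\<in>\<phi>. cball X r)"

definition simple_point_process :: "'w measure \<Rightarrow> ('w \<Rightarrow> (real^'d) set) \<Rightarrow> bool" where
  "simple_point_process M \<Phi> \<longleftrightarrow> prob_space M \<and>
     (\<forall>\<omega>\<in>space M. \<forall>B. bounded B \<longrightarrow> finite (\<Phi> \<omega> \<inter> B)) \<and>
     (\<forall>B\<in>sets borel. bounded B \<longrightarrow>
        (\<forall>k::nat. {\<omega>\<in>space M. card (\<Phi> \<omega> \<inter> B) = k} \<in> sets M))"

definition void_prob :: "'w measure \<Rightarrow> ('w \<Rightarrow> (real^'d) set) \<Rightarrow> (real^'d) set \<Rightarrow> real" where
  "void_prob M \<Phi> B = measure M {\<omega>\<in>space M. \<Phi> \<omega> \<inter> B = {}}"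

text \<open>overline r_c(Phi), extended-real valued (inf of the empty set is infinity)\<close>
definition rc_bar :: "'w measure \<Rightarrow> ('w \<Rightarrow> (real^'d) set) \<Rightarrow> ereal" where
  "rc_bar M \<Phi> = Inf (ereal ` {r. r > 0 \<and> (\<forall>n::nat. n \<ge> 1 \<longrightarrow>
      (\<lambda>\<gamma>. measure M {\<omega>\<in>space M. covered (\<Phi> \<omega>) r \<inter> Qset n \<gamma> = {}}) summable_on contours n)})"

end

theory Submission
  imports Defs
begin

lemma void_event_sets:
  assumes "simple_point_process M \<Phi>" "B \<in> sets borel"
  shows "{\<omega>\<in>space M. \<Phi> \<omega> \<inter> B = {}} \<in> sets M"
proof -
  define E where "E k = {\<omega>\<in>space M. \<Phi> \<omega> \<inter> (B \<inter> cball 0 (real k)) = {}}" for k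
  have E: "E k \<in> sets M" for k
  proof -
    have b: "B \<inter> cball 0 (real k) \<in> sets borel" "bounded (B \<inter> cball 0 (real k))"
      using assms(2) by auto
    have "E k = {\<omega>\<in>space M. card (\<Phi> \<omega> \<inter> (B \<inter> cball 0 (real k))) = 0}"
    proof (intro set_eqI iffI)
      fix \<omega> assume "\<omega> \<in> E k" then show "\<omega> \<in> {\<omega>\<in>space M. card (\<Phi> \<omega> \<inter> (B \<inter> cball 0 (real k))) = 0}"
        unfolding E_def by simp
    next
      fix \<omega> assume w: "\<omega> \<in> {\<omega>\<in>space M. card (\<Phi> \<omega> \<inter> (B \<inter> cball 0 (real k))) = 0}"
      then have "finite (\<Phi> \<omega> \<inter> (B \<inter> cball 0 (real k)))"
        using assms(1) b(2) unfolding simple_point_process_def by blast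
      then show "\<omega> \<in> E k" using w unfolding E_def by simp
    qed
    moreover have "{\<omega>\<in>space M. card (\<Phi> \<omega> \<inter> (B \<inter> cball 0 (real k))) = 0} \<in> sets M"
      using assms(1) b unfolding simple_point_process_def by blast
    ultimately show ?thesis by simp
  qed
  have "{\<omega>\<in>space M. \<Phi> \<omega> \<inter> B = {}} = (\<Inter>k. E k)"
  proof (intro set_eqI iffI)
    fix \<omega> assume "\<omega> \<in> (\<Inter>k. E k)"
    then have sp: "\<omega> \<in> space M" and h: "\<And>k. \<Phi> \<omega> \<inter> (B \<inter> cball 0 (real k)) = {}"
      unfolding E_def by auto
    have "x \<notin> \<Phi> \<omega> \<inter> B" for x
    proof
      assume x: "x \<in> \<Phi> \<omega> \<inter> B"
      obtain k where "norm x \<le> real k" using real_arch_simple by blast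
      then show False using h[of k] x by auto
    qed
    then show "\<omega> \<in> {\<omega>\<in>space M. \<Phi> \<omega> \<inter> B = {}}" using sp by auto
  qed (auto simp: E_def)
  then show ?thesis using E by auto
qed

lemma void_mono_all:
  assumes "simple_point_process M1 \<Phi>1" "simple_point_process M2 \<Phi>2"
    and hyp: "\<forall>B\<in>sets borel. bounded B \<longrightarrow> void_prob M1 \<Phi>1 B \<le> void_prob M2 \<Phi>2 B"
    and B: "B \<in> sets borel"
  shows "void_prob M1 \<Phi>1 B \<le> void_prob M2 \<Phi>2 B"
proof -
  define Bk where "Bk k = B \<inter> cball 0 (real k)" for k
  define E1 where "E1 k = {\<omega>\<in>space M1. \<Phi>1 \<omega> \<inter> Bk k = {}}" for k
  define E2 where "E2 k = {\<omega>\<in>space M2. \<Phi>2 \<omega> \<inter> Bk k = {}}" for k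
  have Bk: "Bk k \<in> sets borel" "bounded (Bk k)" for k using B by (auto simp: Bk_def)
  have dec: "Bk m \<subseteq> Bk n" if "m \<le> n" for m n
    unfolding Bk_def using that by (intro Int_mono subset_refl subset_cball) simp
  have U: "(\<Union>k. Bk k) = B"
  proof (intro set_eqI iffI)
    fix x assume "x \<in> (\<Union>k. Bk k)"
    then show "x \<in> B" by (auto simp: Bk_def)
  next
    fix x assume "x \<in> B"
    moreover obtain k where "norm x \<le> real k" using real_arch_simple by blast
    ultimately show "x \<in> (\<Union>k. Bk k)" by (auto simp: Bk_def)
  qed
  have fm1: "finite_measure M1" using assms(1) unfolding simple_point_process_def
    using prob_space_def by blast
  have fm2: "finite_measure M2" using assms(2) unfolding simple_point_process_def
    using prob_space_def by blast
  have s1: "range E1 \<subseteq> sets M1" unfolding E1_def using void_event_sets[OF assms(1) Bk(1)] by auto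
  have s2: "range E2 \<subseteq> sets M2" unfolding E2_def using void_event_sets[OF assms(2) Bk(1)] by auto
  have d1: "decseq E1" unfolding decseq_def
  proof (intro allI impI)
    fix m n :: nat assume "m \<le> n" then have "Bk m \<subseteq> Bk n" by (rule dec)
    then show "E1 n \<subseteq> E1 m" unfolding E1_def by blast
  qed
  have d2: "decseq E2" unfolding decseq_def
  proof (intro allI impI)
    fix m n :: nat assume "m \<le> n" then have "Bk m \<subseteq> Bk n" by (rule dec)
    then show "E2 n \<subseteq> E2 m" unfolding E2_def by blast
  qed
  have i1: "(\<Inter>k. E1 k) = {\<omega>\<in>space M1. \<Phi>1 \<omega> \<inter> B = {}}"
  proof -
    have "\<Phi>1 \<omega> \<inter> B = {} \<longleftrightarrow> (\<forall>k. \<Phi>1 \<omega> \<inter> Bk k = {})" for \<omega>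
    proof -
      have "\<Phi>1 \<omega> \<inter> B = \<Phi>1 \<omega> \<inter> (\<Union>k. Bk k)" using U by simp
      also have "\<dots> = (\<Union>k. \<Phi>1 \<omega> \<inter> Bk k)" by blast
      finally show ?thesis by blast
    qed
    then show ?thesis unfolding E1_def by auto
  qed
  have i2: "(\<Inter>k. E2 k) = {\<omega>\<in>space M2. \<Phi>2 \<omega> \<inter> B = {}}"
  proof -
    have "\<Phi>2 \<omega> \<inter> B = {} \<longleftrightarrow> (\<forall>k. \<Phi>2 \<omega> \<inter> Bk k = {})" for \<omega>
    proof -
      have "\<Phi>2 \<omega> \<inter> B = \<Phi>2 \<omega> \<inter> (\<Union>k. Bk k)" using U by simp
      also have "\<dots> = (\<Union>k. \<Phi>2 \<omega> \<inter> Bk k)" by blast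
      finally show ?thesis by blast
    qed
    then show ?thesis unfolding E2_def by auto
  qed
  have l1: "(\<lambda>k. measure M1 (E1 k)) \<longlonglongrightarrow> void_prob M1 \<Phi>1 B"
    using finite_measure.finite_Lim_measure_decseq[OF fm1 s1 d1] i1 by (simp add: void_prob_def)
  have l2: "(\<lambda>k. measure M2 (E2 k)) \<longlonglongrightarrow> void_prob M2 \<Phi>2 B"
    using finite_measure.finite_Lim_measure_decseq[OF fm2 s2 d2] i2 by (simp add: void_prob_def)
  have "measure M1 (E1 k) \<le> measure M2 (E2 k)" for k
  proof -
    have "void_prob M1 \<Phi>1 (Bk k) \<le> void_prob M2 \<Phi>2 (Bk k)" using hyp Bk(1)[of k] Bk(2)[of k] by simp
    then show ?thesis unfolding void_prob_def E1_def E2_def .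
  qed
  then show ?thesis using LIMSEQ_le[OF l1 l2] by blast
qed

lemma countable_lattice: "countable (lattice n :: (real^'d) set)"
proof -
  have "lattice n \<subseteq> range (\<lambda>f::'d\<Rightarrow>int. (\<chi> i. of_int (f i) / real n) :: real^'d)"
  proof
    fix z :: "real^'d" assume "z \<in> lattice n"
    then have "\<forall>i. \<exists>k::int. z$i = of_int k / real n" unfolding lattice_def by blast
    then obtain f where f: "\<And>i. z$i = of_int (f i) / real n" by metis
    then have "z = (\<chi> i. of_int (f i) / real n)" by (simp add: vec_eq_iff)
    then show "z \<in> range (\<lambda>f::'d\<Rightarrow>int. (\<chi> i. of_int (f i) / real n) :: real^'d)" by blast
  qed
  then show ?thesis by (rule countable_subset) simp
qed

definition Cbox :: "nat \<Rightarrow> real^'d \<Rightarrow> nat \<Rightarrow> (real^'d) set" where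
  "Cbox n z k = {y. \<forall>i. z$i - 1/(2*real n) + inverse (real (Suc k)) \<le> y$i \<and> y$i \<le> z$i + 1/(2*real n)}"

lemma closed_Cbox: "closed (Cbox n z k)"
  unfolding Cbox_def
  by (intro closed_Collect_all closed_Collect_conj closed_Collect_le continuous_intros)

lemma cube_Cbox: "cube (real n) z = (\<Union>k. Cbox n z k)"
proof (intro set_eqI iffI)
  fix y assume y: "y \<in> cube (real n) z"
  have "\<forall>\<^sub>F k in sequentially. \<forall>i. inverse (real (Suc k)) < y$i - (z$i - 1/(2*real n))"
  proof (rule eventually_all_finite)
    fix i
    have "0 < y$i - (z$i - 1/(2*real n))" using y unfolding cube_def by auto
    then show "\<forall>\<^sub>F k in sequentially. inverse (real (Suc k)) < y$i - (z$i - 1/(2*real n))"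
      using order_tendstoD(2)[OF LIMSEQ_inverse_real_of_nat] by blast
  qed
  then obtain k where kk: "\<forall>i. inverse (real (Suc k)) < y$i - (z$i - 1/(2*real n))"
    unfolding eventually_sequentially by blast
  have "z$i - 1/(2*real n) + inverse (real (Suc k)) \<le> y$i \<and> y$i \<le> z$i + 1/(2*real n)" for i
    using kk[rule_format, of i] y unfolding cube_def by (simp add: less_imp_le)
  then have "y \<in> Cbox n z k" unfolding Cbox_def by blast
  then show "y \<in> (\<Union>k. Cbox n z k)" by blast
next
  fix y assume "y \<in> (\<Union>k. Cbox n z k)"
  then obtain k where k: "y \<in> Cbox n z k" by blast
  have pos: "0 < inverse (real (Suc k))" by simp
  have "z$i - 1/(2*real n) < y$i \<and> y$i \<le> z$i + 1/(2*real n)" for i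
  proof -
    have "z$i - 1/(2*real n) + inverse (real (Suc k)) \<le> y$i \<and> y$i \<le> z$i + 1/(2*real n)"
      using k unfolding Cbox_def by blast
    then show ?thesis using pos by linarith
  qed
  then show "y \<in> cube (real n) z" unfolding cube_def by simp
qed

definition Nbhd :: "nat \<Rightarrow> (real^'d) set \<Rightarrow> real \<Rightarrow> (real^'d) set" where
  "Nbhd n \<gamma> r = {x. \<exists>q\<in>Qset n \<gamma>. dist x q \<le> r}"

lemma Nbhd_borel:
  fixes \<gamma> :: "(real^'d) set"
  assumes "\<gamma> \<subseteq> lattice n"
  shows "Nbhd n \<gamma> r \<in> sets borel"
proof -
  define T where "T z k = (\<Union>q\<in>Cbox n z k. \<Union>y\<in>cball 0 r. {q + y})" for z :: "real^'d" and k
  have eq: "Nbhd n \<gamma> r = (\<Union>z\<in>\<gamma>. \<Union>k. T z k)"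
  proof (intro set_eqI iffI)
    fix x assume "x \<in> Nbhd n \<gamma> r"
    then obtain z q where z: "z \<in> \<gamma>" "q \<in> cube (real n) z" "dist x q \<le> r"
      unfolding Nbhd_def Qset_def by blast
    then obtain k where k: "q \<in> Cbox n z k" using cube_Cbox by blast
    have "x = q + (x - q)" by simp
    moreover have "x - q \<in> cball 0 r" using z(3) by (simp add: dist_norm norm_minus_commute)
    ultimately have "x \<in> T z k" unfolding T_def using k by blast
    then show "x \<in> (\<Union>z\<in>\<gamma>. \<Union>k. T z k)" using z by blast
  next
    fix x assume "x \<in> (\<Union>z\<in>\<gamma>. \<Union>k. T z k)"
    then obtain z k q y where "z \<in> \<gamma>" "q \<in> Cbox n z k" "y \<in> cball 0 r" "x = q + y"
      unfolding T_def by blast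
    moreover have "q \<in> cube (real n) z" using cube_Cbox \<open>q \<in> Cbox n z k\<close> by blast
    moreover have "dist x q \<le> r" using \<open>y \<in> cball 0 r\<close> \<open>x = q + y\<close> by (simp add: dist_norm)
    ultimately show "x \<in> Nbhd n \<gamma> r" unfolding Nbhd_def Qset_def by blast
  qed
  have "closed (T z k)" for z k
    unfolding T_def by (rule closed_compact_sums[OF closed_Cbox compact_cball])
  then have "T z k \<in> sets borel" for z k by (rule borel_closed)
  moreover have "countable \<gamma>" using assms countable_lattice countable_subset by blast
  ultimately show ?thesis unfolding eq
    by (intro sets.countable_UN'' sets.countable_UN) auto
qed

lemma event_eq:
  "{\<omega>\<in>space M. covered (\<Phi> \<omega>) r \<inter> Qset n \<gamma> = {}} = {\<omega>\<in>space M. \<Phi> \<omega> \<inter> Nbhd n \<gamma> r = {}}"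
proof -
  have "covered (\<Phi> \<omega>) r \<inter> Qset n \<gamma> = {} \<longleftrightarrow> \<Phi> \<omega> \<inter> Nbhd n \<gamma> r = {}" for \<omega>
  proof -
    have "covered (\<Phi> \<omega>) r \<inter> Qset n \<gamma> = {} \<longleftrightarrow> (\<forall>X\<in>\<Phi> \<omega>. \<forall>q\<in>Qset n \<gamma>. \<not> dist X q \<le> r)"
      unfolding covered_def by (auto simp: mem_cball disjoint_iff)
    moreover have "\<Phi> \<omega> \<inter> Nbhd n \<gamma> r = {} \<longleftrightarrow> (\<forall>X\<in>\<Phi> \<omega>. \<forall>q\<in>Qset n \<gamma>. \<not> dist X q \<le> r)"
      unfolding Nbhd_def by auto
    ultimately show ?thesis by simp
  qed
  then show ?thesis by simp
qed

theorem corollary6p2: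
  fixes M1 :: "'w1 measure" and \<Phi>1 :: "'w1 \<Rightarrow> (real^'d) set"
    and M2 :: "'w2 measure" and \<Phi>2 :: "'w2 \<Rightarrow> (real^'d) set"
  assumes "simple_point_process M1 \<Phi>1"
    and "simple_point_process M2 \<Phi>2"
    and "\<forall>B\<in>sets borel. bounded B \<longrightarrow> void_prob M1 \<Phi>1 B \<le> void_prob M2 \<Phi>2 B"
  shows "rc_bar M1 \<Phi>1 \<le> rc_bar M2 \<Phi>2"
proof -
  have sub: "{r. r > 0 \<and> (\<forall>n::nat. n \<ge> 1 \<longrightarrow>
      (\<lambda>\<gamma>. measure M2 {\<omega>\<in>space M2. covered (\<Phi>2 \<omega>) r \<inter> Qset n \<gamma> = {}}) summable_on contours n)}
    \<subseteq> {r. r > 0 \<and> (\<forall>n::nat. n \<ge> 1 \<longrightarrow>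
      (\<lambda>\<gamma>. measure M1 {\<omega>\<in>space M1. covered (\<Phi>1 \<omega>) r \<inter> Qset n \<gamma> = {}}) summable_on contours n)}"
  proof (intro subsetI CollectI conjI allI impI)
    fix r assume r: "r \<in> {r. r > 0 \<and> (\<forall>n::nat. n \<ge> 1 \<longrightarrow>
      (\<lambda>\<gamma>. measure M2 {\<omega>\<in>space M2. covered (\<Phi>2 \<omega>) r \<inter> Qset n \<gamma> = {}}) summable_on contours n)}"
    then show "r > 0" by blast
    fix n :: nat assume n: "n \<ge> 1"
    have s2: "(\<lambda>\<gamma>. measure M2 {\<omega>\<in>space M2. covered (\<Phi>2 \<omega>) r \<inter> Qset n \<gamma> = {}}) summable_on contours n"
      using r n by blast
    show "(\<lambda>\<gamma>. measure M1 {\<omega>\<in>space M1. covered (\<Phi>1 \<omega>) r \<inter> Qset n \<gamma> = {}}) summable_on contours n"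
    proof (rule summable_on_comparison_test[OF s2])
      fix \<gamma> :: "(real^'d) set" assume "\<gamma> \<in> contours n"
      then have "\<gamma> \<subseteq> lattice n" unfolding contours_def by blast
      then have "Nbhd n \<gamma> r \<in> sets borel" by (rule Nbhd_borel)
      then have "void_prob M1 \<Phi>1 (Nbhd n \<gamma> r) \<le> void_prob M2 \<Phi>2 (Nbhd n \<gamma> r)"
        using void_mono_all[OF assms] by blast
      then show "measure M1 {\<omega>\<in>space M1. covered (\<Phi>1 \<omega>) r \<inter> Qset n \<gamma> = {}}
          \<le> measure M2 {\<omega>\<in>space M2. covered (\<Phi>2 \<omega>) r \<inter> Qset n \<gamma> = {}}"
        unfolding event_eq void_prob_def .
    qed simp
  qed
  show ?thesis unfolding rc_bar_def
    by (rule Inf_superset_mono, rule image_mono, rule sub)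
qed

end
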